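(* Every BCK-algebra $\mathcal A$ of order $n$ satisfies $\operatorname{cd}(\mathcal A)\ge\frac{3n-2}{n^2}$, and for each $n\ge3$ this bound is attained: the algebra $\mathcal M_n$ defined by $\mathcal M_3=\mathcal{PI}$ and $\mathcal M_n=\mathcal M_{n-1}\oplus\top$ for $n>3$ is a (linear) BCK-algebra of order $n$ with $\operatorname{cd}(\mathcal M_n)=\frac{3n-2}{n^2}$.
   Context: A BCK-algebra is a set $A$ with a binary operation $\cdot$ and a constant $0$ such that for all $x,y,z\in A$: (BCK1) $((x\cdot y)\cdot(x\cdot z))\cdot(z\cdot y)=0$; (BCK2) $(x\cdot(x\cdot y))\cdot y=0$; (BCK3) $x\cdot x=0$; (BCK4) $0\cdot x=0$; (BCK5) $x\cdot y=0$ and $y\cdot x=0$ imply $x=y$. The order $x\le y$ iff $x\cdot y=0$; the algebra is linear if this order is a chain. Define $x\wedge y:=y\cdot(y\cdot x)$; for finite $\mathcal A$, $\operatorname{cd}(\mathcal A)=|\{(x,y)\in A^2:x\wedge y=y\wedge x\}|/|A|^2$. $\mathcal{PI}$ is the BCK-algebra on $\{0,1,2\}$ with $1\cdot0=1$, $2\cdot0=2$, $2\cdot1=2$ and all other products $0$. Iséki's extension $\mathcal A\oplus\top$ adjoins a new element $\top$ with $x\cdot\top=0$, $\top\cdot\top=0$, $\top\cdot x=\top$ for $x\in A$. *)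

theory Defs
  imports Complex_Main
begin

definition bck :: "'a set \<Rightarrow> ('a \<Rightarrow> 'a \<Rightarrow> 'a) \<Rightarrow> 'a \<Rightarrow> bool" where
  "bck A m z \<longleftrightarrow>
     z \<in> A \<and> (\<forall>x\<in>A. \<forall>y\<in>A. m x y \<in> A) \<and>
     (\<forall>x\<in>A. \<forall>y\<in>A. \<forall>w\<in>A. m (m (m x y) (m x w)) (m w y) = z) \<and>
     (\<forall>x\<in>A. \<forall>y\<in>A. m (m x (m x y)) y = z) \<and>
     (\<forall>x\<in>A. m x x = z) \<and>
     (\<forall>x\<in>A. m z x = z) \<and>
     (\<forall>x\<in>A. \<forall>y\<in>A. m x y = z \<and> m y x = z \<longrightarrow> x = y)"

definition bck_le :: "('a \<Rightarrow> 'a \<Rightarrow> 'a) \<Rightarrow> 'a \<Rightarrow> 'a \<Rightarrow> 'a \<Rightarrow> bool" where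
  "bck_le m z x y \<longleftrightarrow> m x y = z"

definition linear_bck :: "'a set \<Rightarrow> ('a \<Rightarrow> 'a \<Rightarrow> 'a) \<Rightarrow> 'a \<Rightarrow> bool" where
  "linear_bck A m z \<longleftrightarrow> bck A m z \<and> (\<forall>x\<in>A. \<forall>y\<in>A. bck_le m z x y \<or> bck_le m z y x)"

definition bck_meet :: "('a \<Rightarrow> 'a \<Rightarrow> 'a) \<Rightarrow> 'a \<Rightarrow> 'a \<Rightarrow> 'a" where
  "bck_meet m x y = m y (m y x)"

definition cd :: "'a set \<Rightarrow> ('a \<Rightarrow> 'a \<Rightarrow> 'a) \<Rightarrow> real" where
  "cd A m = real (card {(x, y) \<in> A \<times> A. bck_meet m x y = bck_meet m y x}) / real (card A) ^ 2"

definition PIop :: "nat \<Rightarrow> nat \<Rightarrow> nat" where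
  "PIop x y = (if x = 1 \<and> y = 0 then 1 else if x = 2 \<and> y = 0 then 2
               else if x = 2 \<and> y = 1 then 2 else 0)"

definition iseki_ext :: "'a \<Rightarrow> 'a \<Rightarrow> ('a \<Rightarrow> 'a \<Rightarrow> 'a) \<Rightarrow> 'a \<Rightarrow> 'a \<Rightarrow> 'a" where
  "iseki_ext t z m x y =
     (if y = t then z else if x = t then t else m x y)"

text \<open>Mop k is the operation of M_(k+3), on the carrier {0..<k+3}; the new top of
  M_(k+4) is the element k+3.\<close>
primrec Mop :: "nat \<Rightarrow> nat \<Rightarrow> nat \<Rightarrow> nat" where
  "Mop 0 = PIop"
| "Mop (Suc k) = iseki_ext (k + 3) 0 (Mop k)"

end

theory Submission
  imports Defs
begin

definition lop :: "nat \<Rightarrow> nat \<Rightarrow> nat" where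
  "lop x y = (if x \<le> y then 0 else x)"

lemma Mop_eq: "x < k + 3 \<Longrightarrow> y < k + 3 \<Longrightarrow> Mop k x y = lop x y"
  by (induction k arbitrary: x y) (auto simp: PIop_def iseki_ext_def lop_def)

lemma bck_lop: "bck A lop 0" if "0 \<in> A" "\<forall>x\<in>A. \<forall>y\<in>A. lop x y \<in> A"
  using that unfolding bck_def lop_def by auto

lemma bck_cong:
  assumes "bck A m' z" "\<forall>x\<in>A. \<forall>y\<in>A. m x y = m' x y"
  shows "bck A m z"
proof -
  have cl: "\<And>x y. x \<in> A \<Longrightarrow> y \<in> A \<Longrightarrow> m' x y \<in> A" using assms(1) unfolding bck_def by blast
  have e: "\<And>x y. x \<in> A \<Longrightarrow> y \<in> A \<Longrightarrow> m x y = m' x y" using assms(2) by blast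
  show ?thesis using assms(1) unfolding bck_def by (simp add: e cl)
qed

lemma x0: assumes "bck A m z" "x \<in> A" shows "m x z = x"
proof -
  have cl: "\<And>x y. x \<in> A \<Longrightarrow> y \<in> A \<Longrightarrow> m x y \<in> A" and zA: "z \<in> A"
    using assms(1) unfolding bck_def by blast+
  have a2: "\<And>x y. x \<in> A \<Longrightarrow> y \<in> A \<Longrightarrow> m (m x (m x y)) y = z"
   and a3: "\<And>x. x \<in> A \<Longrightarrow> m x x = z"
   and a4: "\<And>x. x \<in> A \<Longrightarrow> m z x = z"
   and a5: "\<And>x y. x \<in> A \<Longrightarrow> y \<in> A \<Longrightarrow> m x y = z \<Longrightarrow> m y x = z \<Longrightarrow> x = y"
    using assms(1) unfolding bck_def by blast+
  have 1: "m (m x z) x = z" using a2[of x x] a3[of x] assms(2) by simp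
  have "m (m x (m x z)) z = z" using a2[of x z] assms(2) zA by simp
  hence 2: "m x (m x z) = z" using a5[of "m x (m x z)" z] a4 cl assms(2) zA by simp
  show ?thesis using a5[of "m x z" x] 1 2 cl assms(2) zA by simp
qed

lemma cardS:
  assumes "finite A" "z \<in> A"
  shows "card {(x,y)\<in>A\<times>A. x = y \<or> x = z \<or> y = z} = 3 * card A - 2"
proof -
  have eq: "{(x,y)\<in>A\<times>A. x = y \<or> x = z \<or> y = z} =
     ((\<lambda>x. (x,x)) ` A \<union> (\<lambda>x. (z,x)) ` (A - {z})) \<union> (\<lambda>x. (x,z)) ` (A - {z})"
    using assms by auto
  have c1: "card ((\<lambda>x. (x,x)) ` A) = card A" by (rule card_image) (auto simp: inj_on_def)
  have c2: "card ((\<lambda>x. (z,x)) ` (A - {z})) = card A - 1"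
    using assms by (subst card_image) (auto simp: inj_on_def)
  have c3: "card ((\<lambda>x. (x,z)) ` (A - {z})) = card A - 1"
    using assms by (subst card_image) (auto simp: inj_on_def)
  have d12: "card ((\<lambda>x. (x,x)) ` A \<union> (\<lambda>x. (z,x)) ` (A - {z})) = card A + (card A - 1)"
    using assms c1 c2 by (subst card_Un_disjoint) auto
  have d: "card (((\<lambda>x. (x,x)) ` A \<union> (\<lambda>x. (z,x)) ` (A - {z})) \<union> (\<lambda>x. (x,z)) ` (A - {z}))
     = card A + (card A - 1) + (card A - 1)"
    using assms d12 c3 by (subst card_Un_disjoint) auto
  have "card A \<ge> 1" using assms by (metis One_nat_def card_0_eq empty_iff less_one not_le)
  then show ?thesis using eq d by simp
qed

theorem theorem5p6:
  shows "(\<forall>(A :: 'a set) m z. bck A m z \<and> finite A \<longrightarrow>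
            cd A m \<ge> (3 * real (card A) - 2) / real (card A) ^ 2)
       \<and> (\<forall>n::nat. n \<ge> 3 \<longrightarrow>
            linear_bck {0..<n} (Mop (n - 3)) 0 \<and> card {0..<n} = n \<and>
            cd {0..<n} (Mop (n - 3)) = (3 * real n - 2) / real n ^ 2)"
proof (intro conjI allI impI)
  fix A :: "'a set" and m z
  assume h: "bck A m z \<and> finite A"
  hence b: "bck A m z" and f: "finite A" by auto
  have zA: "z \<in> A" and a3: "\<And>x. x \<in> A \<Longrightarrow> m x x = z" and a4: "\<And>x. x \<in> A \<Longrightarrow> m z x = z"
    using b unfolding bck_def by blast+
  have sub: "{(x,y)\<in>A\<times>A. x = y \<or> x = z \<or> y = z} \<subseteq> {(x, y) \<in> A \<times> A. bck_meet m x y = bck_meet m y x}"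
    using x0[OF b] a3 a4 zA by (auto simp: bck_meet_def)
  have "card {(x,y)\<in>A\<times>A. x = y \<or> x = z \<or> y = z} \<le> card {(x, y) \<in> A \<times> A. bck_meet m x y = bck_meet m y x}"
    by (rule card_mono[OF _ sub]) (rule finite_subset[of _ "A \<times> A"], auto simp: f)
  hence le: "3 * card A - 2 \<le> card {(x, y) \<in> A \<times> A. bck_meet m x y = bck_meet m y x}"
    using cardS[OF f zA] by simp
  have "card A \<ge> 1" using f zA by (metis One_nat_def card_0_eq empty_iff less_one not_le)
  hence "3 * real (card A) - 2 = real (3 * card A - 2)" by (simp add: of_nat_diff)
  also have "\<dots> \<le> real (card {(x, y) \<in> A \<times> A. bck_meet m x y = bck_meet m y x})" using le by simp
  finally show "cd A m \<ge> (3 * real (card A) - 2) / real (card A) ^ 2"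
    unfolding cd_def by (simp add: divide_right_mono)
next
  fix n :: nat assume n3: "n \<ge> 3"
  define k where "k = n - 3"
  have nk: "n = k + 3" using n3 k_def by simp
  have eqA: "\<forall>x\<in>{0..<n}. \<forall>y\<in>{0..<n}. Mop k x y = lop x y" using Mop_eq nk by auto
  have bl: "bck {0..<n} lop 0" by (rule bck_lop) (use n3 in \<open>auto simp: lop_def\<close>)
  have bM: "bck {0..<n} (Mop k) 0" by (rule bck_cong[OF bl eqA])
  show "linear_bck {0..<n} (Mop (n - 3)) 0"
    unfolding k_def[symmetric] linear_bck_def bck_le_def using bM eqA by (auto simp: lop_def)
  show "card {0..<n} = n" by simp
  have set: "{(x, y) \<in> {0..<n} \<times> {0..<n}. bck_meet (Mop k) x y = bck_meet (Mop k) y x}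
     = {(x,y)\<in>{0..<n}\<times>{0..<n}. x = y \<or> x = 0 \<or> y = 0}"
  proof -
    have "\<And>x y. x < n \<Longrightarrow> y < n \<Longrightarrow> bck_meet (Mop k) x y = (if y \<le> x then y else 0)"
      unfolding bck_meet_def using Mop_eq nk by (auto simp: lop_def)
    thus ?thesis by (auto split: if_splits)
  qed
  have c: "card {(x,y)\<in>{0..<n}\<times>{0..<n}. x = y \<or> x = 0 \<or> y = 0} = 3 * n - 2"
    using cardS[of "{0..<n}" 0] n3 by simp
  have "real (3 * n - 2) = 3 * real n - 2" using n3 by (simp add: of_nat_diff)
  then show "cd {0..<n} (Mop (n - 3)) = (3 * real n - 2) / real n ^ 2"
    unfolding k_def[symmetric] cd_def set c by simp
qed

end
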